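(* Let $H$ be a self-adjoint operator on a $2^L$-dimensional Hilbert space whose eigenvalues, counted with multiplicity, are $E_{\boldsymbol n}=E_0+\sum_{k=1}^Ln_k\Lambda_k$, $\boldsymbol n\in\{0,1\}^L$, with real $E_0,\Lambda_1,\dots,\Lambda_L$. Let $\epsilon_1,\dots,\epsilon_{L_B}$ be the distinct values among the $\Lambda_k$, $\epsilon_j$ occurring $g_j$ times, and assume $\epsilon_1,\dots,\epsilon_{L_B}$ are linearly independent over $\mathbb Q$. Let $\chi(t)=\operatorname{tr}(e^{-itH})$. Then for every real $\lambda\ge0$, $$\overline{|\chi(t)|^{2\lambda}}=\prod_{j=1}^{L_B}\frac{4^{\lambda g_j}\,\Gamma\!\left(\tfrac12+\lambda g_j\right)}{\sqrt\pi\,\Gamma(1+\lambda g_j)}.$$ In particular, if all $g_j=1$ (so $L_B=L$), then $\overline{|\chi(t)|}=(4/\pi)^L$.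
   Context: $\overline{f(t)}:=\lim_{T\to\infty}\frac1T\int_0^Tf(t)\,dt$; $\Gamma$ is the Euler Gamma function. *)

theory Defs
  imports "HOL-Analysis.Analysis" "Jordan_Normal_Form.Schur_Decomposition" "Jordan_Normal_Form.Char_Poly"
begin

definition trace_mat :: "'a::comm_ring_1 mat \<Rightarrow> 'a" where
  "trace_mat A = (\<Sum>i<dim_row A. A $$ (i, i))"

definition hermitian_mat :: "complex mat \<Rightarrow> bool" where
  "hermitian_mat A \<longleftrightarrow> dim_row A = dim_col A \<and> mat_adjoint A = A"

definition mat_exp :: "complex mat \<Rightarrow> complex mat" where
  "mat_exp A = mat (dim_row A) (dim_col A)
     (\<lambda>(i, j). (\<Sum>k. (A ^\<^sub>m k) $$ (i, j) / of_nat (fact k)))"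

definition has_time_average :: "(real \<Rightarrow> real) \<Rightarrow> real \<Rightarrow> bool" where
  "has_time_average f a \<longleftrightarrow>
     (\<forall>T>0. f integrable_on {0..T}) \<and>
     ((\<lambda>T. integral {0..T} f / T) \<longlongrightarrow> a) at_top"

end

theory Submission
  imports Defs
begin

lemma hta_const: "has_time_average (\<lambda>t. c) c"
proof -
  have "eventually (\<lambda>T. integral {0..T} (\<lambda>t. c) / T = c) at_top"
    using eventually_gt_at_top[of "0::real"] by eventually_elim auto
  then have "((\<lambda>T. integral {0..T} (\<lambda>t. c) / T) \<longlongrightarrow> c) at_top"
    by (rule tendsto_eventually)
  then show ?thesis unfolding has_time_average_def by auto
qed

lemma hta_add:
  assumes "has_time_average f a" "has_time_average g b"
  shows "has_time_average (\<lambda>t. f t + g t) (a + b)"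
proof -
  have i: "\<forall>T>0. f integrable_on {0..T}" "\<forall>T>0. g integrable_on {0..T}"
    using assms unfolding has_time_average_def by auto
  have l: "((\<lambda>T. integral {0..T} f / T + integral {0..T} g / T) \<longlongrightarrow> a + b) at_top"
    using assms unfolding has_time_average_def by (auto intro: tendsto_add)
  have "eventually (\<lambda>T. integral {0..T} f / T + integral {0..T} g / T =
      integral {0..T} (\<lambda>t. f t + g t) / T) at_top"
    using eventually_gt_at_top[of "0::real"] 
  proof eventually_elim
    case (elim T)
    then show ?case using i by (simp add: integral_add add_divide_distrib)
  qed
  from tendsto_cong[OF this] l
  have "((\<lambda>T. integral {0..T} (\<lambda>t. f t + g t) / T) \<longlongrightarrow> a + b) at_top" by simp
  then show ?thesis using i unfolding has_time_average_def by (auto intro: integrable_add)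
qed

lemma hta_cmult:
  assumes "has_time_average f a"
  shows "has_time_average (\<lambda>t. c * f t) (c * a)"
proof -
  have i: "\<forall>T>0. f integrable_on {0..T}"
    using assms unfolding has_time_average_def by auto
  have l: "((\<lambda>T. c * (integral {0..T} f / T)) \<longlongrightarrow> c * a) at_top"
    by (rule tendsto_mult_left) (use assms in \<open>simp add: has_time_average_def\<close>)
  have "eventually (\<lambda>T. c * (integral {0..T} f / T) =
      integral {0..T} (\<lambda>t. c * f t) / T) at_top"
    by (simp)
  from tendsto_cong[OF this] l
  have "((\<lambda>T. integral {0..T} (\<lambda>t. c * f t) / T) \<longlongrightarrow> c * a) at_top" by blast
  then show ?thesis using i unfolding has_time_average_def by (auto intro: integrable_on_mult_right)
qed

lemma hta_sum:
  assumes "finite A" "\<And>x. x \<in> A \<Longrightarrow> has_time_average (f x) (a x)"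
  shows "has_time_average (\<lambda>t. \<Sum>x\<in>A. f x t) (\<Sum>x\<in>A. a x)"
  using assms
proof (induction A rule: finite_induct)
  case empty
  then show ?case using hta_const[of 0] by simp
next
  case (insert x F)
  then show ?case using hta_add[of "f x" "a x" "\<lambda>t. \<Sum>x\<in>F. f x t" "\<Sum>x\<in>F. a x"] by simp
qed

lemma hta_cos: "has_time_average (\<lambda>t. cos (w * t)) (if w = 0 then 1 else 0)"
proof (cases "w = 0")
  case True
  then show ?thesis using hta_const[of 1] by simp
next
  case False
  have der: "((\<lambda>t. sin (w * t) / w) has_real_derivative cos (w * x)) (at x)" for x
  proof -
    have "((\<lambda>t. sin (w * t) / w) has_real_derivative (cos (w * x) * (w * 1)) / w) (at x)"
      by (auto intro!: derivative_eq_intros)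
    then show ?thesis using False by simp
  qed
  have int: "((\<lambda>t. cos (w * t)) has_integral (sin (w * T) / w)) {0..T}" if "T \<ge> 0" for T
  proof -
    have "((\<lambda>t. cos (w * t)) has_integral (sin (w * T) / w - sin (w * 0) / w)) {0..T}"
    proof (rule fundamental_theorem_of_calculus)
      show "0 \<le> T" by (rule that)
      fix x assume "x \<in> {0..T}"
      show "((\<lambda>t. sin (w * t) / w) has_vector_derivative cos (w * x)) (at x within {0..T})"
        using der[of x] by (simp add: has_real_derivative_iff_has_vector_derivative[symmetric] has_field_derivative_at_within)
    qed
    then show ?thesis by simp
  qed
  have "((\<lambda>T. integral {0..T} (\<lambda>t. cos (w * t)) / T) \<longlongrightarrow> 0) at_top"
  proof (rule Lim_null_comparison)
    show "eventually (\<lambda>T. norm (integral {0..T} (\<lambda>t. cos (w * t)) / T) \<le> 1 / (\<bar>w\<bar> * T)) at_top"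
      using eventually_gt_at_top[of "0::real"]
    proof eventually_elim
      case (elim T)
      then have i: "integral {0..T} (\<lambda>t. cos (w * t)) = sin (w * T) / w" using int by (simp add: integral_unique)
      have "\<bar>sin (w * T) / w / T\<bar> = \<bar>sin (w * T)\<bar> / (\<bar>w\<bar> * T)"
        using elim by (simp add: abs_divide abs_mult)
      also have "\<dots> \<le> 1 / (\<bar>w\<bar> * T)"
        by (rule divide_right_mono) (use elim in auto)
      finally show ?case unfolding i real_norm_def .
    qed
    show "((\<lambda>T. 1 / (\<bar>w\<bar> * T)) \<longlongrightarrow> 0) at_top"
    proof -
      have "((\<lambda>T. (1/\<bar>w\<bar>) * inverse T) \<longlongrightarrow> (1/\<bar>w\<bar>) * 0) at_top"
        by (intro tendsto_mult tendsto_const tendsto_inverse_0_at_top filterlim_ident)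
      moreover have "(\<lambda>T. (1/\<bar>w\<bar>) * inverse T) = (\<lambda>T. 1 / (\<bar>w\<bar> * T))"
        by (rule ext) (simp add: divide_inverse)
      ultimately show ?thesis by simp
    qed
  qed
  moreover have "\<forall>T>0. (\<lambda>t. cos (w * t)) integrable_on {0..T}"
    using int less_imp_le by blast
  ultimately show ?thesis using False unfolding has_time_average_def by simp
qed

lemma hta_approx:
  assumes intg: "\<forall>T>0. G integrable_on {0..T}"
    and approx: "\<And>e. e > 0 \<Longrightarrow> \<exists>G' c'. has_time_average G' c' \<and> (\<forall>t. \<bar>G t - G' t\<bar> \<le> e) \<and> \<bar>c - c'\<bar> \<le> e"
  shows "has_time_average G c"
proof -
  have "((\<lambda>T. integral {0..T} G / T) \<longlongrightarrow> c) at_top"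
  proof (rule tendstoI)
    fix e :: real assume e: "e > 0"
    obtain G' c' where G': "has_time_average G' c'" and close: "\<forall>t. \<bar>G t - G' t\<bar> \<le> e/4"
      and cc: "\<bar>c - c'\<bar> \<le> e/4"
      using approx[of "e/4"] e by auto
    have i': "\<forall>T>0. G' integrable_on {0..T}" and l': "((\<lambda>T. integral {0..T} G' / T) \<longlongrightarrow> c') at_top"
      using G' unfolding has_time_average_def by auto
    have ev: "eventually (\<lambda>T. dist (integral {0..T} G' / T) c' < e/4) at_top"
      using tendstoD[OF l', of "e/4"] e by simp
    show "eventually (\<lambda>T. dist (integral {0..T} G / T) c < e) at_top"
      using ev eventually_gt_at_top[of "0::real"]
    proof eventually_elim
      case (elim T)
      have "\<bar>integral {0..T} G - integral {0..T} G'\<bar> = \<bar>integral {0..T} (\<lambda>t. G t - G' t)\<bar>"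
        using intg i' elim by (simp add: integral_diff)
      also have "\<dots> \<le> integral {0..T} (\<lambda>t. e/4)"
      proof -
        have "(\<lambda>t. G t - G' t) integrable_on {0..T}" using intg i' elim by (auto intro: integrable_diff)
        moreover have "(\<lambda>t. e/4) integrable_on {0..T}" by (rule integrable_const_ivl)
        ultimately show ?thesis using integral_norm_bound_integral[of "\<lambda>t. G t - G' t" "{0..T}" "\<lambda>t. e/4"] close
          by auto
      qed
      also have "\<dots> = e/4 * T" using elim by simp
      finally have d: "\<bar>integral {0..T} G - integral {0..T} G'\<bar> \<le> e/4 * T" .
      have "\<bar>integral {0..T} G / T - integral {0..T} G' / T\<bar> = \<bar>integral {0..T} G - integral {0..T} G'\<bar> / T"
        using elim by (simp add: diff_divide_distrib[symmetric] abs_divide)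
      also have "\<dots> \<le> e/4" using d elim by (simp add: divide_simps)
      finally have "\<bar>integral {0..T} G / T - integral {0..T} G' / T\<bar> \<le> e/4" .
      moreover have "\<bar>integral {0..T} G / T - c\<bar> \<le> \<bar>integral {0..T} G / T - integral {0..T} G' / T\<bar>
          + \<bar>integral {0..T} G' / T - c'\<bar> + \<bar>c - c'\<bar>" by linarith
      ultimately show ?case using elim(1) cc e unfolding dist_real_def by linarith
    qed
  qed
  then show ?thesis using intg unfolding has_time_average_def by auto
qed

definition cc :: "nat \<Rightarrow> nat \<Rightarrow> real" where
  "cc m a = real (m choose a) / 2 ^ m"

definition mu :: "nat \<Rightarrow> real" where
  "mu m = (\<Sum>a\<le>m. cc m a * (if 2 * int a - int m = 0 then 1 else 0))"

lemma cos_pow_exp: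
  fixes x :: real
  shows "complex_of_real (cos x ^ m) =
    (\<Sum>a\<le>m. complex_of_real (cc m a) * exp (\<i> * complex_of_real (real_of_int (2 * int a - int m) * x)))"
proof -
  have c: "complex_of_real (cos x) = (exp (\<i> * of_real x) + exp (- (\<i> * of_real x))) / 2"
    by (simp add: cos_exp_eq cos_of_real[symmetric])
  have "complex_of_real (cos x ^ m) = (exp (\<i> * of_real x) + exp (- (\<i> * of_real x))) ^ m / 2 ^ m"
    by (simp add: c power_divide)
  also have "\<dots> = (\<Sum>a\<le>m. of_nat (m choose a) * exp (\<i> * of_real x) ^ a * exp (- (\<i> * of_real x)) ^ (m - a)) / 2 ^ m"
    by (simp add: binomial_ring)
  also have "\<dots> = (\<Sum>a\<le>m. complex_of_real (cc m a) * exp (\<i> * complex_of_real (real_of_int (2 * int a - int m) * x)))"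
    unfolding sum_divide_distrib
  proof (rule sum.cong[OF refl])
    fix a assume a: "a \<in> {..m}"
    have "exp (\<i> * of_real x) ^ a * exp (- (\<i> * of_real x)) ^ (m - a)
        = exp (of_nat a * (\<i> * of_real x)) * exp (of_nat (m - a) * (- (\<i> * of_real x)))"
      by (simp add: exp_of_nat_mult[symmetric] algebra_simps)
    also have "\<dots> = exp (of_nat a * (\<i> * of_real x) + of_nat (m - a) * (- (\<i> * of_real x)))"
      by (rule exp_add[symmetric])
    also have "of_nat a * (\<i> * of_real x) + of_nat (m - a) * (- (\<i> * of_real x)) =
        \<i> * complex_of_real (real_of_int (2 * int a - int m) * x)"
      using a by (simp add: of_nat_diff algebra_simps)
    finally have e: "exp (\<i> * of_real x) ^ a * exp (- (\<i> * of_real x)) ^ (m - a) =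
        exp (\<i> * complex_of_real (real_of_int (2 * int a - int m) * x))" .
    show "of_nat (m choose a) * exp (\<i> * of_real x) ^ a * exp (- (\<i> * of_real x)) ^ (m - a) / 2 ^ m =
      complex_of_real (cc m a) * exp (\<i> * complex_of_real (real_of_int (2 * int a - int m) * x))"
      by (simp add: e cc_def mult.assoc)
  qed
  finally show ?thesis .
qed

lemma cos_pow_sum:
  fixes x :: real
  shows "cos x ^ m = (\<Sum>a\<le>m. cc m a * cos (real_of_int (2 * int a - int m) * x))"
proof -
  have "cos x ^ m = Re (complex_of_real (cos x ^ m))" by simp
  also have "\<dots> = (\<Sum>a\<le>m. cc m a * cos (real_of_int (2 * int a - int m) * x))"
    unfolding cos_pow_exp by (simp add: Re_exp)
  finally show ?thesis .
qed

lemma cos_prod_sum: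
  fixes V :: "real set" and m :: "real \<Rightarrow> nat" and t :: real
  assumes "finite V"
  shows "(\<Prod>v\<in>V. cos (v * t) ^ m v) =
    (\<Sum>a\<in>PiE V (\<lambda>v. {..m v}). (\<Prod>v\<in>V. cc (m v) (a v)) *
        cos ((\<Sum>v\<in>V. real_of_int (2 * int (a v) - int (m v)) * v) * t))"
proof -
  have "complex_of_real (\<Prod>v\<in>V. cos (v * t) ^ m v) = (\<Prod>v\<in>V. complex_of_real (cos (v * t) ^ m v))"
    by simp
  also have "\<dots> = (\<Prod>v\<in>V. \<Sum>a\<le>m v. complex_of_real (cc (m v) a) *
        exp (\<i> * complex_of_real (real_of_int (2 * int a - int (m v)) * (v * t))))"
    by (simp only: cos_pow_exp)
  also have "\<dots> = (\<Sum>a\<in>PiE V (\<lambda>v. {..m v}). \<Prod>v\<in>V. complex_of_real (cc (m v) (a v)) *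
        exp (\<i> * complex_of_real (real_of_int (2 * int (a v) - int (m v)) * (v * t))))"
    by (rule prod_sum_PiE) (use assms in auto)
  also have "\<dots> = (\<Sum>a\<in>PiE V (\<lambda>v. {..m v}). complex_of_real (\<Prod>v\<in>V. cc (m v) (a v)) *
        exp (\<i> * complex_of_real ((\<Sum>v\<in>V. real_of_int (2 * int (a v) - int (m v)) * v) * t)))"
  proof (rule sum.cong[OF refl])
    fix a
    have "exp (\<i> * complex_of_real ((\<Sum>v\<in>V. real_of_int (2 * int (a v) - int (m v)) * v) * t))
      = exp (\<Sum>v\<in>V. \<i> * complex_of_real (real_of_int (2 * int (a v) - int (m v)) * (v * t)))"
      by (simp add: sum_distrib_left sum_distrib_right mult.assoc)
    also have "\<dots> = (\<Prod>v\<in>V. exp (\<i> * complex_of_real (real_of_int (2 * int (a v) - int (m v)) * (v * t))))"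
      by (rule exp_sum[OF assms])
    finally show "(\<Prod>v\<in>V. complex_of_real (cc (m v) (a v)) *
        exp (\<i> * complex_of_real (real_of_int (2 * int (a v) - int (m v)) * (v * t)))) =
      complex_of_real (\<Prod>v\<in>V. cc (m v) (a v)) *
        exp (\<i> * complex_of_real ((\<Sum>v\<in>V. real_of_int (2 * int (a v) - int (m v)) * v) * t))"
      by (simp add: prod.distrib)
  qed
  finally have eq: "complex_of_real (\<Prod>v\<in>V. cos (v * t) ^ m v) = \<dots>" .
  have "(\<Prod>v\<in>V. cos (v * t) ^ m v) = Re (complex_of_real (\<Prod>v\<in>V. cos (v * t) ^ m v))"
    by (rule Re_complex_of_real[symmetric])
  also have "\<dots> = (\<Sum>a\<in>PiE V (\<lambda>v. {..m v}). (\<Prod>v\<in>V. cc (m v) (a v)) *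
        cos ((\<Sum>v\<in>V. real_of_int (2 * int (a v) - int (m v)) * v) * t))"
  proof -
    have re: "\<And>c w. Re (complex_of_real c * exp (\<i> * complex_of_real w)) = c * cos w"
      by (simp add: Re_exp)
    show ?thesis unfolding eq Re_sum re ..
  qed
  finally show ?thesis .
qed

definition qindep :: "real set \<Rightarrow> bool" where
  "qindep V \<longleftrightarrow> (\<forall>q :: real \<Rightarrow> rat. (\<Sum>v\<in>V. of_rat (q v) * v) = 0 \<longrightarrow> (\<forall>v\<in>V. q v = 0))"

lemma qindep_int:
  assumes "qindep V" "(\<Sum>v\<in>V. real_of_int (k v) * v) = 0" "v \<in> V"
  shows "k v = 0"
proof -
  have "(\<Sum>v\<in>V. of_rat (rat_of_int (k v)) * v) = 0" using assms(2) by (simp add: of_rat_of_int_eq)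
  then have "rat_of_int (k v) = 0"
    using assms(1)[unfolded qindep_def, rule_format, of "\<lambda>v. rat_of_int (k v)"] assms(3) by blast
  then show ?thesis by simp
qed

lemma hta_cos_prod:
  fixes V :: "real set" and m :: "real \<Rightarrow> nat"
  assumes fin: "finite V" and ind: "qindep V"
  shows "has_time_average (\<lambda>t. \<Prod>v\<in>V. cos (v * t) ^ m v) (\<Prod>v\<in>V. mu (m v))"
proof -
  let ?w = "\<lambda>a. (\<Sum>v\<in>V. real_of_int (2 * int (a v) - int (m v)) * v)"
  have h: "has_time_average (\<lambda>t. \<Sum>a\<in>PiE V (\<lambda>v. {..m v}). (\<Prod>v\<in>V. cc (m v) (a v)) * cos (?w a * t))
     (\<Sum>a\<in>PiE V (\<lambda>v. {..m v}). (\<Prod>v\<in>V. cc (m v) (a v)) * (if ?w a = 0 then 1 else 0))"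
    apply (rule hta_sum)
     apply (simp add: fin finite_PiE)
    apply (rule hta_cmult)
    apply (rule hta_cos)
    done
  have "(\<Sum>a\<in>PiE V (\<lambda>v. {..m v}). (\<Prod>v\<in>V. cc (m v) (a v)) * (if ?w a = 0 then 1 else 0))
     = (\<Sum>a\<in>PiE V (\<lambda>v. {..m v}). \<Prod>v\<in>V. cc (m v) (a v) * (if 2 * int (a v) - int (m v) = 0 then 1 else 0))"
  proof (rule sum.cong[OF refl])
    fix a
    have "(if ?w a = 0 then 1 else 0) = (\<Prod>v\<in>V. (if 2 * int (a v) - int (m v) = 0 then 1 else 0 :: real))"
    proof (cases "?w a = 0")
      case True
      then have "\<forall>v\<in>V. 2 * int (a v) - int (m v) = 0"
        using qindep_int[OF ind, of "\<lambda>v. 2 * int (a v) - int (m v)"] by blast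
      then show ?thesis using True by simp
    next
      case False
      have "\<exists>v\<in>V. 2 * int (a v) - int (m v) \<noteq> 0"
      proof (rule ccontr)
        assume "\<not> (\<exists>v\<in>V. 2 * int (a v) - int (m v) \<noteq> 0)"
        then have "\<forall>v\<in>V. 2 * int (a v) - int (m v) = 0" by blast
        then have "?w a = 0" by (intro sum.neutral) simp
        then show False using False by contradiction
      qed
      then obtain v where v: "v \<in> V" "2 * int (a v) - int (m v) \<noteq> 0" by blast
      have "(\<Prod>v\<in>V. (if 2 * int (a v) - int (m v) = 0 then 1 else 0 :: real)) = 0"
        by (rule prod_zero[OF fin]) (use v in auto)
      then show ?thesis using False by simp
    qed
    then show "(\<Prod>v\<in>V. cc (m v) (a v)) * (if ?w a = 0 then 1 else 0) =
      (\<Prod>v\<in>V. cc (m v) (a v) * (if 2 * int (a v) - int (m v) = 0 then 1 else 0))"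
      by (simp add: prod.distrib)
  qed
  also have "\<dots> = (\<Prod>v\<in>V. mu (m v))"
    unfolding mu_def by (rule prod_sum_PiE[symmetric]) (use fin in auto)
  finally show ?thesis using h by (simp add: cos_prod_sum[OF fin])
qed

lemma int_cos_int:
  fixes k :: int
  shows "((\<lambda>x. cos (real_of_int k * x)) has_integral (if k = 0 then pi else 0)) {0..pi}"
proof (cases "k = 0")
  case True
  then show ?thesis using has_integral_const_real[of "1::real" 0 pi] by simp
next
  case False
  have "((\<lambda>x. cos (real_of_int k * x)) has_integral
      (sin (real_of_int k * pi) / real_of_int k - sin (real_of_int k * 0) / real_of_int k)) {0..pi}"
    apply (rule fundamental_theorem_of_calculus)
    using False
    by (auto intro!: derivative_eq_intros simp: has_real_derivative_iff_has_vector_derivative[symmetric])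
  moreover have "sin (real_of_int k * pi) = 0" by (simp add: sin_times_pi_eq_0)
  ultimately show ?thesis using False by simp
qed

lemma int_cos_pow: "((\<lambda>x. cos x ^ m) has_integral (pi * mu m)) {0..pi}"
proof -
  have "((\<lambda>x. \<Sum>a\<le>m. cc m a * cos (real_of_int (2 * int a - int m) * x)) has_integral
      (\<Sum>a\<le>m. cc m a * (if 2 * int a - int m = 0 then pi else 0))) {0..pi}"
    by (intro has_integral_sum has_integral_mult_right int_cos_int) auto
  moreover have "(\<Sum>a\<le>m. cc m a * (if 2 * int a - int m = 0 then pi else 0)) = pi * mu m"
    unfolding mu_def sum_distrib_left by (rule sum.cong) auto
  moreover have "(\<lambda>x. \<Sum>a\<le>m. cc m a * cos (real_of_int (2 * int a - int m) * x)) = (\<lambda>x. cos x ^ m)"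
    by (rule ext, rule cos_pow_sum[symmetric])
  ultimately show ?thesis by simp
qed

lemma real_poly_fun_poly:
  fixes f :: "real \<Rightarrow> real"
  assumes "real_polynomial_function f"
  shows "\<exists>p. \<forall>x. f x = poly p x"
  using assms
proof (induction rule: real_polynomial_function.induct)
  case (linear f)
  have "f x = poly [:0, f 1:] x" for x
    using linear_scale_real[OF bounded_linear.linear[OF linear], of x 1] by simp
  then show ?case by blast
next
  case (const c)
  have "(\<lambda>x::real. c) x = poly [:c:] x" for x by simp
  then show ?case by blast
next
  case (add f g)
  then obtain p q where "\<forall>x. f x = poly p x" "\<forall>x. g x = poly q x" by blast
  then have "\<forall>x. f x + g x = poly (p + q) x" by simp
  then show ?case by blast
next
  case (mult f g)
  then obtain p q where "\<forall>x. f x = poly p x" "\<forall>x. g x = poly q x" by blast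
  then have "\<forall>x. f x * g x = poly (p * q) x" by simp
  then show ?case by blast
qed

lemma weier:
  fixes h :: "real \<Rightarrow> real"
  assumes "continuous_on {-1..1} h" "e > 0"
  shows "\<exists>p. \<forall>x\<in>{-1..1}. \<bar>h x - poly p x\<bar> \<le> e"
proof -
  obtain g where g: "polynomial_function g" "\<forall>x\<in>{-1..1}. norm (h x - g x) < e"
    using Stone_Weierstrass_polynomial_function[OF compact_Icc assms(1) assms(2)] by blast
  obtain p where "\<forall>x. g x = poly p x"
    using real_poly_fun_poly g(1) real_polynomial_function_eq by blast
  then show ?thesis using g(2) by (metis less_eq_real_def real_norm_def)
qed

definition Mf :: "(real \<Rightarrow> real) \<Rightarrow> real" where
  "Mf h = integral {0..pi} (\<lambda>x. h (cos x)) / pi"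

lemma cos_in: "cos (x::real) \<in> {-1..1}" using cos_ge_minus_one[of x] cos_le_one[of x] by auto

lemma cont_comp_cos:
  assumes "continuous_on {-1..1} h"
  shows "continuous_on (S::real set) (\<lambda>x. h (cos x))"
proof (rule continuous_on_compose2[OF assms])
  show "continuous_on S cos" using continuous_on_cos[OF continuous_on_id, of S] by simp
qed (use cos_in in auto)

lemma Mf_poly: "Mf (poly p) = (\<Sum>j\<le>degree p. coeff p j * mu j)"
proof -
  have "((\<lambda>x. \<Sum>j\<le>degree p. coeff p j * cos x ^ j) has_integral (\<Sum>j\<le>degree p. coeff p j * (pi * mu j))) {0..pi}"
    by (intro has_integral_sum has_integral_mult_right int_cos_pow) auto
  then have "integral {0..pi} (\<lambda>x. poly p (cos x)) = (\<Sum>j\<le>degree p. coeff p j * (pi * mu j))"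
    by (simp add: poly_altdef integral_unique)
  then show ?thesis unfolding Mf_def by (simp add: sum_divide_distrib)
qed

lemma Mf_close:
  assumes c1: "continuous_on {-1..1} h1" and c2: "continuous_on {-1..1} h2"
    and d: "\<forall>x\<in>{-1..1}. \<bar>h1 x - h2 x\<bar> \<le> d"
  shows "\<bar>Mf h1 - Mf h2\<bar> \<le> d"
proof -
  have i1: "(\<lambda>x. h1 (cos x)) integrable_on {0..pi}" and i2: "(\<lambda>x. h2 (cos x)) integrable_on {0..pi}"
    by (intro integrable_continuous_interval cont_comp_cos c1 c2)+
  have "\<bar>integral {0..pi} (\<lambda>x. h1 (cos x)) - integral {0..pi} (\<lambda>x. h2 (cos x))\<bar>
      = \<bar>integral {0..pi} (\<lambda>x. h1 (cos x) - h2 (cos x))\<bar>"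
    using i1 i2 by (simp add: integral_diff)
  also have "\<dots> \<le> integral {0..pi} (\<lambda>x. d)"
  proof -
    have a: "(\<lambda>x. h1 (cos x) - h2 (cos x)) integrable_on {0..pi}" using i1 i2 by (rule integrable_diff)
    have b: "(\<lambda>x. d) integrable_on {0..pi}" by (rule integrable_const_ivl)
    have c: "norm (h1 (cos x) - h2 (cos x)) \<le> d" for x using d cos_in[of x] by auto
    show ?thesis using integral_norm_bound_integral[OF a b c] by simp
  qed
  also have "\<dots> = pi * d" by simp
  finally show ?thesis unfolding Mf_def
    by (simp add: diff_divide_distrib[symmetric] abs_divide divide_simps mult.commute)
qed

lemma prod_close:
  fixes a b :: "'a \<Rightarrow> real"
  assumes "finite V" "B \<ge> 1" "\<forall>v\<in>V. \<bar>a v\<bar> \<le> B \<and> \<bar>b v\<bar> \<le> B \<and> \<bar>a v - b v\<bar> \<le> d"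
  shows "\<bar>(\<Prod>v\<in>V. a v) - (\<Prod>v\<in>V. b v)\<bar> \<le> real (card V) * B ^ card V * d"
  using assms
proof (induction V rule: finite_induct)
  case empty
  then show ?case by simp
next
  case (insert x F)
  let ?n = "card F"
  have IH: "\<bar>prod a F - prod b F\<bar> \<le> real ?n * B ^ ?n * d" using insert by auto
  have ax: "\<bar>a x\<bar> \<le> B" and bx: "\<bar>a x - b x\<bar> \<le> d" using insert by auto
  then have d0: "d \<ge> 0" by linarith
  have pb: "\<bar>prod b F\<bar> \<le> B ^ ?n"
  proof -
    have "\<bar>prod b F\<bar> = (\<Prod>v\<in>F. \<bar>b v\<bar>)" by (simp add: abs_prod)
    also have "\<dots> \<le> (\<Prod>v\<in>F. B)" by (rule prod_mono) (use insert in auto)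
    finally show ?thesis by simp
  qed
  have "\<bar>prod a (insert x F) - prod b (insert x F)\<bar> = \<bar>a x * (prod a F - prod b F) + (a x - b x) * prod b F\<bar>"
    using insert by (simp add: algebra_simps)
  also have "\<dots> \<le> \<bar>a x\<bar> * \<bar>prod a F - prod b F\<bar> + \<bar>a x - b x\<bar> * \<bar>prod b F\<bar>"
    by (metis abs_mult abs_triangle_ineq)
  also have "\<dots> \<le> B * (real ?n * B ^ ?n * d) + d * B ^ ?n"
    by (intro add_mono mult_mono IH ax bx pb) (use insert d0 in auto)
  also have "\<dots> \<le> B * (real ?n * B ^ ?n * d) + d * B ^ (Suc ?n)"
  proof -
    have "B ^ ?n \<le> B ^ Suc ?n" using insert by (intro power_increasing) auto
    then show ?thesis using d0 by (intro add_left_mono mult_left_mono) auto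
  qed
  also have "\<dots> = real (card (insert x F)) * B ^ card (insert x F) * d"
    using insert by (simp add: algebra_simps)
  finally show ?case .
qed

lemma hta_poly_prod:
  fixes V :: "real set" and p :: "real \<Rightarrow> real poly"
  assumes fin: "finite V" and ind: "qindep V"
  shows "has_time_average (\<lambda>t. \<Prod>v\<in>V. poly (p v) (cos (v * t))) (\<Prod>v\<in>V. Mf (poly (p v)))"
proof -
  let ?D = "PiE V (\<lambda>v. {..degree (p v)})"
  have eq: "(\<Prod>v\<in>V. poly (p v) (cos (v * t))) =
    (\<Sum>J\<in>?D. (\<Prod>v\<in>V. coeff (p v) (J v)) * (\<Prod>v\<in>V. cos (v * t) ^ J v))" for t
  proof -
    have "(\<Prod>v\<in>V. poly (p v) (cos (v * t))) = (\<Prod>v\<in>V. \<Sum>j\<le>degree (p v). coeff (p v) j * cos (v * t) ^ j)"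
      by (simp add: poly_altdef)
    also have "\<dots> = (\<Sum>J\<in>?D. \<Prod>v\<in>V. coeff (p v) (J v) * cos (v * t) ^ J v)"
      by (rule prod_sum_PiE) (use fin in auto)
    finally show ?thesis by (simp add: prod.distrib)
  qed
  have h: "has_time_average (\<lambda>t. \<Sum>J\<in>?D. (\<Prod>v\<in>V. coeff (p v) (J v)) * (\<Prod>v\<in>V. cos (v * t) ^ J v))
     (\<Sum>J\<in>?D. (\<Prod>v\<in>V. coeff (p v) (J v)) * (\<Prod>v\<in>V. mu (J v)))"
    apply (rule hta_sum)
     apply (simp add: fin finite_PiE)
    apply (rule hta_cmult)
    apply (rule hta_cos_prod[OF fin ind])
    done
  have "(\<Sum>J\<in>?D. (\<Prod>v\<in>V. coeff (p v) (J v)) * (\<Prod>v\<in>V. mu (J v)))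
      = (\<Sum>J\<in>?D. \<Prod>v\<in>V. coeff (p v) (J v) * mu (J v))"
    by (simp add: prod.distrib)
  also have "\<dots> = (\<Prod>v\<in>V. Mf (poly (p v)))"
    unfolding Mf_poly by (rule prod_sum_PiE[symmetric]) (use fin in auto)
  finally show ?thesis using h by (simp add: eq)
qed

lemma hta_main:
  fixes V :: "real set" and h :: "real \<Rightarrow> real \<Rightarrow> real"
  assumes fin: "finite V" and ind: "qindep V"
    and cont: "\<And>v. v \<in> V \<Longrightarrow> continuous_on {-1..1} (h v)"
    and bnd: "\<And>v x. v \<in> V \<Longrightarrow> x \<in> {-1..1} \<Longrightarrow> \<bar>h v x\<bar> \<le> B"
    and B: "B \<ge> 0"
  shows "has_time_average (\<lambda>t. \<Prod>v\<in>V. h v (cos (v * t))) (\<Prod>v\<in>V. Mf (h v))"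
proof (rule hta_approx)
  show "\<forall>T>0. (\<lambda>t. \<Prod>v\<in>V. h v (cos (v * t))) integrable_on {0..T}"
  proof (intro allI impI integrable_continuous_interval continuous_on_prod)
    fix T v assume "v \<in> V"
    show "continuous_on {0..T} (\<lambda>t. h v (cos (v * t)))"
      by (rule continuous_on_compose2[OF cont_comp_cos[OF cont[OF \<open>v \<in> V\<close>], of UNIV]]) (auto intro!: continuous_intros)
  qed
next
  fix e :: real assume e: "e > 0"
  define n where "n = card V"
  define K where "K = real n * (B + 1) ^ n + 1"
  have K0: "0 \<le> real n * (B + 1) ^ n" using B by (intro mult_nonneg_nonneg zero_le_power) auto
  have K: "K > 0" "real n * (B + 1) ^ n \<le> K" using K0 unfolding K_def by auto
  define d where "d = min 1 (e / K)"
  have d: "d > 0" "d \<le> 1" "d \<le> e / K" using e K unfolding d_def by auto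
  have "\<forall>v\<in>V. \<exists>q. \<forall>x\<in>{-1..1}. \<bar>h v x - poly q x\<bar> \<le> d"
    using weier[OF cont d(1)] by blast
  from bchoice[OF this] obtain p where p0: "\<forall>v\<in>V. \<forall>x\<in>{-1..1}. \<bar>h v x - poly (p v) x\<bar> \<le> d"
    by blast
  have p: "\<bar>h v x - poly (p v) x\<bar> \<le> d" if "v \<in> V" "x \<in> {-1..1}" for v x
    using p0 that by blast
  have pb: "\<bar>poly (p v) x\<bar> \<le> B + 1" if "v \<in> V" "x \<in> {-1..1}" for v x
    using p[OF that] bnd[OF that] d by linarith
  have hb: "\<bar>h v x\<bar> \<le> B + 1" if "v \<in> V" "x \<in> {-1..1}" for v x
    using bnd[OF that] by linarith
  have key: "real n * (B + 1) ^ n * d \<le> e"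
  proof -
    have "real n * (B + 1) ^ n * d \<le> K * (e / K)"
      using K d by (intro mult_mono) auto
    then show ?thesis using K by simp
  qed
  have contp: "continuous_on {-1..1} (poly (p v))" for v
    by (intro continuous_on_poly continuous_on_id)
  show "\<exists>G' c'. has_time_average G' c' \<and>
      (\<forall>t. \<bar>(\<Prod>v\<in>V. h v (cos (v * t))) - G' t\<bar> \<le> e) \<and> \<bar>(\<Prod>v\<in>V. Mf (h v)) - c'\<bar> \<le> e"
  proof (intro exI conjI allI)
    show "has_time_average (\<lambda>t. \<Prod>v\<in>V. poly (p v) (cos (v * t))) (\<Prod>v\<in>V. Mf (poly (p v)))"
      by (rule hta_poly_prod[OF fin ind])
    fix t
    have "\<bar>(\<Prod>v\<in>V. h v (cos (v * t))) - (\<Prod>v\<in>V. poly (p v) (cos (v * t)))\<bar> \<le> real n * (B + 1) ^ n * d"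
      unfolding n_def
    proof (rule prod_close[OF fin])
      show "\<forall>v\<in>V. \<bar>h v (cos (v * t))\<bar> \<le> B + 1 \<and> \<bar>poly (p v) (cos (v * t))\<bar> \<le> B + 1 \<and>
          \<bar>h v (cos (v * t)) - poly (p v) (cos (v * t))\<bar> \<le> d"
      proof
        fix v assume v: "v \<in> V"
        show "\<bar>h v (cos (v * t))\<bar> \<le> B + 1 \<and> \<bar>poly (p v) (cos (v * t))\<bar> \<le> B + 1 \<and>
          \<bar>h v (cos (v * t)) - poly (p v) (cos (v * t))\<bar> \<le> d"
          using hb[OF v cos_in] pb[OF v cos_in] p[OF v cos_in] by simp
      qed
    qed (use B in simp)
    then show "\<bar>(\<Prod>v\<in>V. h v (cos (v * t))) - (\<Prod>v\<in>V. poly (p v) (cos (v * t)))\<bar> \<le> e"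
      using key by linarith
  next
    have mb: "\<bar>Mf g\<bar> \<le> B + 1" if "continuous_on {-1..1} g" "\<forall>x\<in>{-1..1}. \<bar>g x\<bar> \<le> B + 1" for g
      using Mf_close[OF that(1) continuous_on_const[of _ 0]] that(2) by (simp add: Mf_def)
    have "\<bar>(\<Prod>v\<in>V. Mf (h v)) - (\<Prod>v\<in>V. Mf (poly (p v)))\<bar> \<le> real n * (B + 1) ^ n * d"
      unfolding n_def
    proof (rule prod_close[OF fin])
      show "\<forall>v\<in>V. \<bar>Mf (h v)\<bar> \<le> B + 1 \<and> \<bar>Mf (poly (p v))\<bar> \<le> B + 1 \<and> \<bar>Mf (h v) - Mf (poly (p v))\<bar> \<le> d"
      proof
        fix v assume v: "v \<in> V"
        have hb': "\<forall>x\<in>{-1..1}. \<bar>h v x\<bar> \<le> B + 1" using hb[OF v] by blast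
        have pb': "\<forall>x\<in>{-1..1}. \<bar>poly (p v) x\<bar> \<le> B + 1" using pb[OF v] by blast
        have pp: "\<forall>x\<in>{-1..1}. \<bar>h v x - poly (p v) x\<bar> \<le> d" using p[OF v] by blast
        show "\<bar>Mf (h v)\<bar> \<le> B + 1 \<and> \<bar>Mf (poly (p v))\<bar> \<le> B + 1 \<and> \<bar>Mf (h v) - Mf (poly (p v))\<bar> \<le> d"
          using mb[OF cont[OF v] hb'] mb[OF contp pb'] Mf_close[OF cont[OF v] contp pp] by simp
      qed
    qed (use B in simp)
    then show "\<bar>(\<Prod>v\<in>V. Mf (h v)) - (\<Prod>v\<in>V. Mf (poly (p v)))\<bar> \<le> e"
      using key by linarith
  qed
qed

lemma one_plus_cos_nonneg: "0 \<le> 1 + cos (x::real)"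
  using cos_ge_minus_one[of x] by linarith

lemma beta_pointwise:
  fixes x s :: real
  assumes x: "0 < x" "x < pi"
  shows "((1 - cos x) / 2) powr (1/2 - 1) * (1 - (1 - cos x) / 2) powr (s + 1/2 - 1) * (sin x / 2)
       = ((1 + cos x) / 2) powr s"
proof -
  define u where "u = (1 - cos x) / 2"
  define w where "w = (1 + cos x) / 2"
  have c: "cos x < 1" "cos x > -1"
    using x cos_monotone_0_pi[of 0 x] cos_monotone_0_pi[of x pi] by auto
  have u: "u > 0" and w: "w > 0" using c unfolding u_def w_def by auto
  have w1: "1 - u = w" unfolding u_def w_def by (simp add: field_simps)
  have s0: "sin x > 0" using sin_gt_zero[OF x] .
  have uw: "4 * (u * w) = 1 - cos x ^ 2"
    unfolding u_def w_def by (simp add: field_simps power2_eq_square)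
  have "sin x ^ 2 = 4 * (u * w)"
    unfolding uw by (simp add: sin_squared_eq)
  then have "sin x = sqrt (4 * (u * w))" using s0 by (metis abs_of_pos real_sqrt_abs)
  then have sx: "sin x / 2 = (u * w) powr (1/2)"
    using u w by (simp add: real_sqrt_mult powr_half_sqrt)
  have "u powr (1/2 - 1) * w powr (s + 1/2 - 1) * (u * w) powr (1/2)
      = (u powr (1/2 - 1) * u powr (1/2)) * (w powr (s + 1/2 - 1) * w powr (1/2))"
    using u w by (simp add: powr_mult)
  also have "\<dots> = u powr 0 * w powr s"
    by (simp add: powr_add[symmetric])
  also have "\<dots> = w powr s" using u by simp
  finally show ?thesis unfolding w1[symmetric] u_def[symmetric] sx
    by (simp add: w1 w_def)
qed

lemma beta_half:
  fixes s :: real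
  assumes s: "s > 0"
  shows "((\<lambda>x. ((1 + cos x) / 2) powr s) has_integral Beta (1/2) (s + 1/2)) {0..pi}"
proof -
  define f where "f t = t powr (1/2 - 1) * (1 - t) powr (s + 1/2 - 1)" for t :: real
  define g where "g x = (1 - cos x) / 2" for x :: real
  define g' where "g' x = sin x / 2" for x :: real
  define \<phi> where "\<phi> x = ((1 + cos x) / 2) powr s" for x :: real
  have cphi: "continuous_on {0..pi} \<phi>"
    unfolding \<phi>_def by (rule continuous_on_powr') (use s one_plus_cos_nonneg in \<open>auto intro!: continuous_intros\<close>)
  have iphi: "set_integrable lborel {0..pi} \<phi>"
    unfolding set_integrable_def by (rule borel_integrable_compact[OF compact_Icc cphi])
  have pw: "f (g x) * g' x = \<phi> x" if "0 < x" "x < pi" for x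
    using beta_pointwise[OF that, of s] unfolding f_def g_def g'_def \<phi>_def by simp
  have ein: "einterval (ereal 0) (ereal pi) = {0<..<pi}" by (auto simp: einterval_def)
  have ifg: "set_integrable lborel (einterval (ereal 0) (ereal pi)) (\<lambda>x. f (g x) * g' x)"
  proof -
    have "set_integrable lborel {0<..<pi} \<phi>"
      by (rule set_integrable_subset[OF iphi]) auto
    then show ?thesis unfolding ein
      by (subst set_integrable_cong[OF refl refl, where f' = \<phi>]) (auto simp: pw)
  qed
  have gcont: "\<And>x. isCont g x" unfolding g_def by (intro continuous_intros) auto
  have sub: "interval_lebesgue_integral lborel (ereal 0) (ereal 1) f = (LBINT x=ereal 0..ereal pi. f (g x) * g' x)"
  proof (rule interval_integral_substitution_nonneg)
    show "ereal 0 < ereal pi" by simp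
    fix x assume x: "ereal 0 < ereal x" "ereal x < ereal pi"
    then have x': "0 < x" "x < pi" by auto
    show "(g has_real_derivative g' x) (at x)"
      unfolding g_def g'_def by (auto intro!: derivative_eq_intros)
    show "isCont g' x" unfolding g'_def by (intro continuous_intros) auto
    show "0 \<le> f (g x)" unfolding f_def by simp
    have c: "cos x < 1" "cos x > -1"
      using x' cos_monotone_0_pi[of 0 x] cos_monotone_0_pi[of x pi] by auto
    then have gx: "0 < g x" "g x < 1" unfolding g_def by auto
    show "isCont f (g x)"
      unfolding f_def using gx by (intro continuous_intros) auto
  next
    fix x assume x: "ereal 0 \<le> ereal x" "ereal x \<le> ereal pi"
    then show "0 \<le> g' x" unfolding g'_def by (auto intro!: sin_ge_zero)
  next
    have "(g \<longlongrightarrow> g 0) (at_right 0)" using gcont by (simp add: isCont_def filterlim_at_split)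
    then show "((ereal \<circ> g \<circ> real_of_ereal) \<longlongrightarrow> ereal 0) (at_right (ereal 0))"
      unfolding ereal_tendsto_simps o_assoc[symmetric] by (simp add: g_def)
  next
    have "(g \<longlongrightarrow> g pi) (at_left pi)" using gcont by (simp add: isCont_def filterlim_at_split)
    then show "((ereal \<circ> g \<circ> real_of_ereal) \<longlongrightarrow> ereal 1) (at_left (ereal pi))"
      unfolding ereal_tendsto_simps o_assoc[symmetric] by (simp add: g_def)
  next
    show "set_integrable lborel (einterval (ereal 0) (ereal pi)) (\<lambda>x. f (g x) * g' x)" by (rule ifg)
  qed
  have lhs: "interval_lebesgue_integral lborel (ereal 0) (ereal 1) f = Beta (1/2) (s + 1/2)"
  proof -
    have "interval_lebesgue_integral lborel (ereal 0) (ereal 1) f = integral {0..1} f"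
      by (rule interval_integral_eq_integral) (use integrable_Beta[of "1/2" "s + 1/2"] s in \<open>auto simp: f_def\<close>)
    also have "\<dots> = Beta (1/2) (s + 1/2)"
      using has_integral_Beta_real[of "1/2" "s + 1/2"] s unfolding f_def by (auto intro: integral_unique)
    finally show ?thesis .
  qed
  have rhs: "(LBINT x=ereal 0..ereal pi. f (g x) * g' x) = integral {0..pi} \<phi>"
  proof -
    have "(LBINT x=ereal 0..ereal pi. f (g x) * g' x) = (LBINT x=ereal 0..ereal pi. \<phi> x)"
      by (rule interval_integral_cong) (auto simp: einterval_def pw)
    also have "\<dots> = integral {0..pi} \<phi>"
      by (rule interval_integral_eq_integral) (use iphi in auto)
    finally show ?thesis .
  qed
  have "integral {0..pi} \<phi> = Beta (1/2) (s + 1/2)" using sub lhs rhs by simp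
  moreover have "\<phi> integrable_on {0..pi}" by (rule integrable_continuous_interval[OF cphi])
  ultimately show ?thesis unfolding \<phi>_def by (metis has_integral_integral)
qed

lemma trace_mult_comm:
  fixes A B :: "'a::comm_ring_1 mat"
  assumes A: "A \<in> carrier_mat n m" and B: "B \<in> carrier_mat m n"
  shows "trace_mat (A * B) = trace_mat (B * A)"
proof -
  have "trace_mat (A * B) = (\<Sum>i<n. \<Sum>l<m. A $$ (i, l) * B $$ (l, i))"
    using A B unfolding trace_mat_def
    by (intro sum.cong refl) (auto simp: scalar_prod_def lessThan_atLeast0)
  also have "\<dots> = (\<Sum>l<m. \<Sum>i<n. B $$ (l, i) * A $$ (i, l))"
    by (subst sum.swap) (simp add: mult.commute)
  also have "\<dots> = trace_mat (B * A)"
    using A B unfolding trace_mat_def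
    by (intro sum.cong refl) (auto simp: scalar_prod_def lessThan_atLeast0)
  finally show ?thesis .
qed

lemma ut_mult:
  fixes A B :: "'a::comm_ring_1 mat"
  assumes A: "A \<in> carrier_mat n n" and B: "B \<in> carrier_mat n n"
    and uA: "upper_triangular A" and uB: "upper_triangular B"
  shows "upper_triangular (A * B) \<and> (\<forall>i<n. (A * B) $$ (i, i) = A $$ (i, i) * B $$ (i, i))"
proof
  show "upper_triangular (A * B)"
  proof (rule upper_triangularI)
    fix i j assume ji: "j < i" and i: "i < dim_row (A * B)"
    then have i': "i < n" using A by simp
    have "(A * B) $$ (i, j) = (\<Sum>l\<in>{0..<n}. A $$ (i, l) * B $$ (l, j))"
      using A B i' ji by (simp add: scalar_prod_def)
    also have "\<dots> = (\<Sum>l\<in>{0..<n}. 0)"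
    proof (rule sum.cong[OF refl])
      fix l assume l: "l \<in> {0..<n}"
      show "A $$ (i, l) * B $$ (l, j) = 0"
      proof (cases "l < i")
        case True
        have "A $$ (i, l) = 0" by (rule upper_triangularD[OF uA True]) (use i' A in auto)
        then show ?thesis by simp
      next
        case False then have "j < l" using ji by simp
        then have "B $$ (l, j) = 0" by (rule upper_triangularD[OF uB]) (use l B in auto)
        then show ?thesis by simp
      qed
    qed
    finally show "(A * B) $$ (i, j) = 0" by simp
  qed
next
  show "\<forall>i<n. (A * B) $$ (i, i) = A $$ (i, i) * B $$ (i, i)"
  proof (intro allI impI)
    fix i assume i: "i < n"
    have "(A * B) $$ (i, i) = (\<Sum>l\<in>{0..<n}. A $$ (i, l) * B $$ (l, i))"
      using A B i by (simp add: scalar_prod_def)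
    also have "\<dots> = (\<Sum>l\<in>{0..<n}. if l = i then A $$ (i, i) * B $$ (i, i) else 0)"
    proof (rule sum.cong[OF refl])
      fix l assume l: "l \<in> {0..<n}"
      show "A $$ (i, l) * B $$ (l, i) = (if l = i then A $$ (i, i) * B $$ (i, i) else 0)"
      proof (cases "l < i")
        case True
        have "A $$ (i, l) = 0" by (rule upper_triangularD[OF uA True]) (use i A in auto)
        then show ?thesis using True by simp
      next
        case False
        show ?thesis
        proof (cases "l = i")
          case False': False
          then have "i < l" using False by simp
          then have "B $$ (l, i) = 0" by (rule upper_triangularD[OF uB]) (use l B in auto)
          then show ?thesis using False' by simp
        qed simp
      qed
    qed
    also have "\<dots> = A $$ (i, i) * B $$ (i, i)" using i by simp
    finally show "(A * B) $$ (i, i) = A $$ (i, i) * B $$ (i, i)" .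
  qed
qed

lemma ut_pow:
  fixes B :: "'a::comm_ring_1 mat"
  assumes B: "B \<in> carrier_mat n n" and uB: "upper_triangular B"
  shows "upper_triangular (B ^\<^sub>m k) \<and> (\<forall>i<n. (B ^\<^sub>m k) $$ (i, i) = B $$ (i, i) ^ k)"
proof (induction k)
  case 0
  then show ?case using B by simp
next
  case (Suc k)
  have "upper_triangular (B ^\<^sub>m k * B) \<and> (\<forall>i<n. (B ^\<^sub>m k * B) $$ (i, i) = (B ^\<^sub>m k) $$ (i, i) * B $$ (i, i))"
    by (rule ut_mult[OF pow_carrier_mat[OF B] B]) (use Suc uB in auto)
  then show ?case using Suc by simp
qed

lemma trace_pow_eig:
  fixes H :: "complex mat"
  assumes H: "H \<in> carrier_mat n n" and cp: "char_poly H = (\<Prod>e\<leftarrow>es. [:- e, 1:])"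
  shows "trace_mat (H ^\<^sub>m k) = (\<Sum>e\<leftarrow>es. e ^ k)"
proof -
  obtain B P Q where sd: "schur_decomposition H es = (B, P, Q)" by (cases "schur_decomposition H es") auto
  from schur_decomposition[OF H cp sd]
  have sim: "similar_mat_wit H B P Q" and uB: "upper_triangular B" and dg: "diag_mat B = es" by auto
  note w = similar_mat_witD2[OF H sim]
  have "H ^\<^sub>m k = P * B ^\<^sub>m k * Q" by (rule similar_mat_wit_pow_id[OF sim])
  then have "trace_mat (H ^\<^sub>m k) = trace_mat (P * B ^\<^sub>m k * Q)" by simp
  also have "\<dots> = trace_mat (Q * (P * B ^\<^sub>m k))"
    by (rule trace_mult_comm[of _ n n]) (use w in auto)
  also have "Q * (P * B ^\<^sub>m k) = (Q * P) * B ^\<^sub>m k"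
    by (rule assoc_mult_mat[symmetric]) (use w in auto)
  also have "\<dots> = B ^\<^sub>m k" using w by simp
  also have "trace_mat (B ^\<^sub>m k) = (\<Sum>i<n. B $$ (i, i) ^ k)"
    unfolding trace_mat_def using w ut_pow[OF w(5) uB, of k] by simp
  also have "\<dots> = (\<Sum>e\<leftarrow>es. e ^ k)"
    unfolding dg[symmetric] diag_mat_def using w
    by (simp add: sum_set_upt_conv_sum_list_nat[symmetric] lessThan_atLeast0 o_def)
  finally show ?thesis .
qed

lemma pow_entry_bound:
  fixes A :: "complex mat"
  assumes A: "A \<in> carrier_mat n n" and M: "\<And>i j. i < n \<Longrightarrow> j < n \<Longrightarrow> cmod (A $$ (i, j)) \<le> M"
    and M0: "M \<ge> 0"
  shows "i < n \<Longrightarrow> j < n \<Longrightarrow> cmod ((A ^\<^sub>m k) $$ (i, j)) \<le> (real n * M) ^ k"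
proof (induction k arbitrary: i j)
  case 0
  then show ?case using A by simp
next
  case (Suc k)
  have "(A ^\<^sub>m Suc k) $$ (i, j) = (\<Sum>l\<in>{0..<n}. (A ^\<^sub>m k) $$ (i, l) * A $$ (l, j))"
    using A Suc.prems by (simp add: scalar_prod_def)
  also have "cmod \<dots> \<le> (\<Sum>l\<in>{0..<n}. cmod ((A ^\<^sub>m k) $$ (i, l) * A $$ (l, j)))"
    by (rule norm_sum)
  also have "\<dots> \<le> (\<Sum>l\<in>{0..<n}. (real n * M) ^ k * M)"
    unfolding norm_mult
    by (intro sum_mono mult_mono Suc.IH M) (use Suc.prems M0 in auto)
  also have "\<dots> = (real n * M) ^ Suc k" by (simp add: algebra_simps)
  finally show ?case .
qed

lemma entry_summable:
  fixes A :: "complex mat"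
  assumes A: "A \<in> carrier_mat n n" and i: "i < n" and j: "j < n"
  shows "summable (\<lambda>k. (A ^\<^sub>m k) $$ (i, j) / of_nat (fact k))"
proof -
  define M where "M = (\<Sum>i<n. \<Sum>j<n. cmod (A $$ (i, j)))"
  have M: "cmod (A $$ (i, j)) \<le> M" if "i < n" "j < n" for i j
  proof -
    have "cmod (A $$ (i, j)) \<le> (\<Sum>j<n. cmod (A $$ (i, j)))"
      by (rule member_le_sum) (use that in auto)
    also have "\<dots> \<le> M" unfolding M_def
      by (rule member_le_sum[of i "{..<n}" "\<lambda>i. \<Sum>j<n. cmod (A $$ (i, j))"]) (use that in \<open>auto intro: sum_nonneg\<close>)
    finally show ?thesis .
  qed
  have M0: "M \<ge> 0" unfolding M_def by (intro sum_nonneg) auto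
  show ?thesis
  proof (rule summable_comparison_test)
    show "\<exists>N. \<forall>k\<ge>N. norm ((A ^\<^sub>m k) $$ (i, j) / of_nat (fact k)) \<le> inverse (fact k) * (real n * M) ^ k"
      using pow_entry_bound[OF A M M0 i j]
      by (auto simp: norm_divide divide_simps mult.commute)
    show "summable (\<lambda>k. inverse (fact k) * (real n * M) ^ k)" by (rule summable_exp)
  qed
qed

lemma trace_mat_exp:
  fixes A :: "complex mat"
  assumes A: "A \<in> carrier_mat n n"
  shows "trace_mat (mat_exp A) = (\<Sum>k. trace_mat (A ^\<^sub>m k) / of_nat (fact k))"
proof -
  have "trace_mat (mat_exp A) = (\<Sum>i<n. \<Sum>k. (A ^\<^sub>m k) $$ (i, i) / of_nat (fact k))"
    using A unfolding trace_mat_def mat_exp_def by simp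
  also have "\<dots> = (\<Sum>k. \<Sum>i<n. (A ^\<^sub>m k) $$ (i, i) / of_nat (fact k))"
    by (rule suminf_sum[symmetric]) (use entry_summable[OF A] in auto)
  also have "\<dots> = (\<Sum>k. trace_mat (A ^\<^sub>m k) / of_nat (fact k))"
    using A unfolding trace_mat_def by (simp add: sum_divide_distrib)
  finally show ?thesis .
qed

lemma pow_smult:
  fixes H :: "complex mat"
  assumes H: "H \<in> carrier_mat n n"
  shows "(c \<cdot>\<^sub>m H) ^\<^sub>m k = c ^ k \<cdot>\<^sub>m (H ^\<^sub>m k)"
proof (induction k)
  case 0
  then show ?case using H by (auto intro!: eq_matI)
next
  case (Suc k)
  have "(c \<cdot>\<^sub>m H) ^\<^sub>m Suc k = (c ^ k \<cdot>\<^sub>m (H ^\<^sub>m k)) * (c \<cdot>\<^sub>m H)" using Suc by simp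
  also have "\<dots> = c ^ k \<cdot>\<^sub>m ((H ^\<^sub>m k) * (c \<cdot>\<^sub>m H))"
    by (rule mult_smult_assoc_mat[of _ n n _ n]) (use H in auto)
  also have "(H ^\<^sub>m k) * (c \<cdot>\<^sub>m H) = c \<cdot>\<^sub>m ((H ^\<^sub>m k) * H)"
    by (rule mult_smult_distrib[of _ n n _ n]) (use H in auto)
  finally show ?case using H by (auto intro!: eq_matI)
qed

lemma trace_exp_eig:
  fixes H :: "complex mat"
  assumes H: "H \<in> carrier_mat n n" and cp: "char_poly H = (\<Prod>e\<leftarrow>es. [:- e, 1:])"
  shows "trace_mat (mat_exp (c \<cdot>\<^sub>m H)) = (\<Sum>e\<leftarrow>es. exp (c * e))"
proof -
  have cH: "c \<cdot>\<^sub>m H \<in> carrier_mat n n" using H by simp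
  have tk: "trace_mat ((c \<cdot>\<^sub>m H) ^\<^sub>m k) / of_nat (fact k) = (\<Sum>i<length es. (c * es ! i) ^ k / fact k)" for k
  proof -
    have "trace_mat ((c \<cdot>\<^sub>m H) ^\<^sub>m k) = c ^ k * trace_mat (H ^\<^sub>m k)"
      unfolding pow_smult[OF H] trace_mat_def using H by (simp add: sum_distrib_left)
    also have "\<dots> = c ^ k * (\<Sum>i<length es. es ! i ^ k)"
      unfolding trace_pow_eig[OF H cp] by (simp add: sum_list_sum_nth atLeast0LessThan)
    finally show ?thesis by (simp add: sum_distrib_left sum_divide_distrib power_mult_distrib)
  qed
  have "(\<lambda>k. \<Sum>i<length es. (c * es ! i) ^ k / fact k) sums (\<Sum>i<length es. exp (c * es ! i))"
  proof (rule sums_sum)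
    fix i
    show "(\<lambda>k. (c * es ! i) ^ k / fact k) sums exp (c * es ! i)"
      using exp_converges[of "c * es ! i"] by (simp add: scaleR_conv_of_real divide_inverse mult.commute)
  qed
  then have "(\<lambda>k. trace_mat ((c \<cdot>\<^sub>m H) ^\<^sub>m k) / of_nat (fact k)) sums (\<Sum>i<length es. exp (c * es ! i))"
    unfolding tk .
  then show ?thesis
    unfolding trace_mat_exp[OF cH] by (simp add: sums_unique[symmetric] sum_list_sum_nth atLeast0LessThan)
qed

lemma chi_formula:
  fixes H :: "complex mat" and c :: complex
  assumes dimH: "H \<in> carrier_mat (2 ^ L) (2 ^ L)"
    and spec: "char_poly H =
       (\<Prod>n\<in>{1..L} \<rightarrow>\<^sub>E {0::nat, 1}.
          [:- complex_of_real (E0 + (\<Sum>k=1..L. real (n k) * \<Lambda> k)), 1:])"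
  shows "trace_mat (mat_exp (c \<cdot>\<^sub>m H)) = exp (c * of_real E0) * (\<Prod>k\<in>{1..L}. 1 + exp (c * of_real (\<Lambda> k)))"
proof -
  define D where "D = {1..L} \<rightarrow>\<^sub>E {0::nat, 1}"
  define E' where "E' n = complex_of_real (E0 + (\<Sum>k=1..L. real (n k) * \<Lambda> k))" for n :: "nat \<Rightarrow> nat"
  have finD: "finite D" unfolding D_def by (intro finite_PiE) auto
  obtain xs where xs: "set xs = D" "distinct xs" using finite_distinct_list[OF finD] by blast
  have cp: "char_poly H = (\<Prod>e\<leftarrow>map E' xs. [:-e, 1:])"
  proof -
    have "char_poly H = (\<Prod>n\<in>set xs. [:- E' n, 1:])" unfolding spec xs(1) D_def E'_def ..
    also have "\<dots> = (\<Prod>e\<leftarrow>map E' xs. [:-e, 1:])"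
      by (simp add: prod.distinct_set_conv_list[OF xs(2)] o_def)
    finally show ?thesis .
  qed
  have "trace_mat (mat_exp (c \<cdot>\<^sub>m H)) = (\<Sum>e\<leftarrow>map E' xs. exp (c * e))" by (rule trace_exp_eig[OF dimH cp])
  also have "\<dots> = (\<Sum>n\<in>D. exp (c * E' n))"
    by (simp add: sum.distinct_set_conv_list[OF xs(2)] xs(1)[symmetric] o_def)
  also have "\<dots> = (\<Sum>n\<in>D. exp (c * of_real E0) * (\<Prod>k\<in>{1..L}. exp (c * of_real (real (n k) * \<Lambda> k))))"
  proof (rule sum.cong[OF refl])
    fix n
    have "c * E' n = c * of_real E0 + (\<Sum>k\<in>{1..L}. c * of_real (real (n k) * \<Lambda> k))"
      unfolding E'_def by (simp add: distrib_left sum_distrib_left)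
    then show "exp (c * E' n) = exp (c * of_real E0) * (\<Prod>k\<in>{1..L}. exp (c * of_real (real (n k) * \<Lambda> k)))"
      by (simp add: exp_add exp_sum)
  qed
  also have "\<dots> = exp (c * of_real E0) * (\<Sum>n\<in>D. \<Prod>k\<in>{1..L}. exp (c * of_real (real (n k) * \<Lambda> k)))"
    by (simp add: sum_distrib_left)
  also have "(\<Sum>n\<in>D. \<Prod>k\<in>{1..L}. exp (c * of_real (real (n k) * \<Lambda> k))) =
      (\<Prod>k\<in>{1..L}. \<Sum>b\<in>{0::nat, 1}. exp (c * of_real (real b * \<Lambda> k)))"
    unfolding D_def by (rule prod_sum_PiE[symmetric]) auto
  also have "\<dots> = (\<Prod>k\<in>{1..L}. 1 + exp (c * of_real (\<Lambda> k)))" by simp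
  finally show ?thesis .
qed

lemma norm_one_plus_exp:
  "cmod (1 + exp (- (\<i> * complex_of_real t) * complex_of_real w)) ^ 2 = 2 + 2 * cos (w * t)"
proof -
  have "cmod (1 + exp (- (\<i> * complex_of_real t) * complex_of_real w)) ^ 2 =
     (1 + cos (t * w)) ^ 2 + (sin (t * w)) ^ 2"
    by (simp add: cmod_power2 Re_exp Im_exp)
  also have "\<dots> = 2 + 2 * cos (w * t)"
    using sin_cos_squared_add[of "t * w"] by (simp add: power2_eq_square algebra_simps)
  finally show ?thesis .
qed

lemma norm_one_plus_exp':
  "(cmod (1 + exp (- (\<i> * complex_of_real t * complex_of_real w))))\<^sup>2 = 2 + 2 * cos (w * t)"
  using norm_one_plus_exp[of t w] by simp

lemma chi_sq:
  fixes H :: "complex mat"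
  assumes dimH: "H \<in> carrier_mat (2 ^ L) (2 ^ L)"
    and spec: "char_poly H =
       (\<Prod>n\<in>{1..L} \<rightarrow>\<^sub>E {0::nat, 1}.
          [:- complex_of_real (E0 + (\<Sum>k=1..L. real (n k) * \<Lambda> k)), 1:])"
  shows "cmod (trace_mat (mat_exp ((- (\<i> * complex_of_real t)) \<cdot>\<^sub>m H))) ^ 2 =
     (\<Prod>k\<in>{1..L}. 2 + 2 * cos (\<Lambda> k * t))"
proof -
  have n1: "cmod (exp (- (\<i> * complex_of_real t) * of_real E0)) = 1" by (simp add: norm_exp_eq_Re)
  show ?thesis
    unfolding chi_formula[OF dimH spec] norm_mult n1 prod_norm[symmetric] power_mult_distrib prod_power_distrib
    by (simp add: norm_one_plus_exp')
qed

lemma pow_powr_nat: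
  fixes x a :: real
  assumes "x \<ge> 0" "n \<ge> 1"
  shows "(x powr a) ^ n = x powr (a * real n)"
proof (cases "x = 0")
  case True then show ?thesis using assms by (simp add: power_0_left)
next
  case False then show ?thesis by (simp add: powr_power mult.commute)
qed

lemma Mf_target:
  fixes s :: real
  assumes s: "s > 0"
  shows "Mf (\<lambda>x. (2 + 2 * x) powr s) = 4 powr s * Gamma (1/2 + s) / (sqrt pi * Gamma (1 + s))"
proof -
  have eq: "(2 + 2 * cos x) powr s = 4 powr s * ((1 + cos x) / 2) powr s" for x
  proof -
    have "(2 + 2 * cos x) powr s = (4 * ((1 + cos x) / 2)) powr s"
      by (rule arg_cong[where f = "\<lambda>y. y powr s"]) simp
    also have "\<dots> = 4 powr s * ((1 + cos x) / 2) powr s"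
      by (rule powr_mult)
    finally show ?thesis .
  qed
  have "((\<lambda>x. 4 powr s * ((1 + cos x) / 2) powr s) has_integral (4 powr s * Beta (1/2) (s + 1/2))) {0..pi}"
    by (intro has_integral_mult_right beta_half s)
  then have "integral {0..pi} (\<lambda>x. (2 + 2 * cos x) powr s) = 4 powr s * Beta (1/2) (s + 1/2)"
    unfolding eq by (rule integral_unique)
  moreover have "Beta (1/2) (s + 1/2) = sqrt pi * Gamma (1/2 + s) / Gamma (1 + s)"
    unfolding Beta_def Gamma_one_half_real by (simp add: add.commute add.left_commute)
  ultimately have "Mf (\<lambda>x. (2 + 2 * x) powr s) = 4 powr s * (sqrt pi * Gamma (1/2 + s) / Gamma (1 + s)) / (sqrt pi * sqrt pi)"
    unfolding Mf_def by simp
  also have "\<dots> = 4 powr s * Gamma (1/2 + s) / (sqrt pi * Gamma (1 + s))"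
  proof -
    have aux: "a * (q * b / c) / (q * q) = a * b / (q * c)" if "q > 0" for a b c q :: real
      using that by (cases "c = 0") (auto simp: field_simps)
    show ?thesis by (rule aux) simp
  qed
  finally show ?thesis .
qed

lemma countable_negligible:
  fixes S :: "real set"
  assumes "countable S"
  shows "negligible S"
proof -
  have "S = \<Union>((\<lambda>x. {x}) ` S)" by auto
  moreover have "negligible (\<Union>((\<lambda>x. {x}) ` S))"
    by (rule negligible_countable_Union) (use assms in auto)
  ultimately show ?thesis by simp
qed

lemma cos_minus1_countable:
  fixes w :: real
  shows "countable {t. cos (w * t) = -1}"
proof (cases "w = 0")
  case True then show ?thesis by simp
next
  case False
  have "{t. cos (w * t) = -1} \<subseteq> (\<lambda>m::int. (2 * real_of_int m + 1) * pi / w) ` UNIV"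
  proof
    fix t assume "t \<in> {t. cos (w * t) = -1}"
    then obtain m where "w * t = (2 * real_of_int m + 1) * pi" using cos_eq_minus1 by auto
    then have "t = (2 * real_of_int m + 1) * pi / w" using False by (simp add: field_simps)
    then show "t \<in> range (\<lambda>m::int. (2 * real_of_int m + 1) * pi / w)" by auto
  qed
  then show ?thesis by (rule countable_subset) auto
qed

theorem mainTheorem12:
  fixes L :: nat and H :: "complex mat" and E0 :: real and \<Lambda> :: "nat \<Rightarrow> real"
    and lam :: real
  assumes dimH: "H \<in> carrier_mat (2 ^ L) (2 ^ L)"
    and herm: "hermitian_mat H"
    and spec: "char_poly H =
       (\<Prod>n\<in>{1..L} \<rightarrow>\<^sub>E {0::nat, 1}.
          [:- complex_of_real (E0 + (\<Sum>k=1..L. real (n k) * \<Lambda> k)), 1:])"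
    and indep: "\<forall>q :: real \<Rightarrow> rat.
       (\<Sum>v\<in>\<Lambda> ` {1..L}. of_rat (q v) * v) = 0 \<longrightarrow> (\<forall>v\<in>\<Lambda> ` {1..L}. q v = 0)"
    and lam: "lam \<ge> 0"
  defines "chi \<equiv> (\<lambda>t::real. trace_mat (mat_exp ((- (\<i> * complex_of_real t)) \<cdot>\<^sub>m H)))"
    and "g \<equiv> (\<lambda>v::real. card {k\<in>{1..L}. \<Lambda> k = v})"
  shows "has_time_average (\<lambda>t. cmod (chi t) powr (2 * lam))
           (\<Prod>v\<in>\<Lambda> ` {1..L}.
              4 powr (lam * real (g v)) * Gamma (1/2 + lam * real (g v))
              / (sqrt pi * Gamma (1 + lam * real (g v))))
       \<and> ((\<forall>v\<in>\<Lambda> ` {1..L}. g v = 1) \<longrightarrow>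
            has_time_average (\<lambda>t. cmod (chi t)) ((4 / pi) ^ L))"
proof -
  define V where "V = \<Lambda> ` {1..L}"
  have finV: "finite V" unfolding V_def by simp
  have indV: "qindep V" using indep unfolding qindep_def V_def .
  have gpos: "g v \<ge> 1" if "v \<in> V" for v
  proof -
    from that obtain k where k: "k \<in> {1..L}" "\<Lambda> k = v" unfolding V_def by auto
    have "{k\<in>{1..L}. \<Lambda> k = v} \<noteq> {}" using k by auto
    moreover have "finite {k\<in>{1..L}. \<Lambda> k = v}" by simp
    ultimately show ?thesis unfolding g_def by (simp add: Suc_le_eq card_gt_0_iff)
  qed
  have gle: "g v \<le> L" for v
  proof -
    have "card {k\<in>{1..L}. \<Lambda> k = v} \<le> card {1..L}" by (rule card_mono) auto
    then show ?thesis unfolding g_def by simp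
  qed
  have chisq: "cmod (chi t) ^ 2 = (\<Prod>k\<in>{1..L}. 2 + 2 * cos (\<Lambda> k * t))" for t
    unfolding chi_def using chi_sq[OF dimH spec] by simp
  have group: "(\<Prod>k\<in>{1..L}. F (\<Lambda> k)) = (\<Prod>v\<in>V. F v ^ g v)" for F :: "real \<Rightarrow> real"
  proof -
    have "(\<Prod>k\<in>{1..L}. F (\<Lambda> k)) = (\<Prod>v\<in>\<Lambda> ` {1..L}. \<Prod>k\<in>{x\<in>{1..L}. \<Lambda> x = v}. F (\<Lambda> k))"
      by (rule prod.image_gen) simp
    also have "\<dots> = (\<Prod>v\<in>V. F v ^ g v)"
      unfolding V_def g_def by (intro prod.cong refl) simp
    finally show ?thesis .
  qed
  have main: "has_time_average (\<lambda>t. cmod (chi t) powr (2 * l))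
           (\<Prod>v\<in>V. 4 powr (l * real (g v)) * Gamma (1/2 + l * real (g v))
              / (sqrt pi * Gamma (1 + l * real (g v))))" if l: "l > 0" for l
  proof -
    define h where "h v = (\<lambda>x::real. (2 + 2 * x) powr (l * real (g v)))" for v
    have sp: "l * real (g v) > 0" if "v \<in> V" for v using l gpos[OF that] by simp
    have eqf: "cmod (chi t) powr (2 * l) = (\<Prod>v\<in>V. h v (cos (v * t)))" for t
    proof -
      have "cmod (chi t) powr (2 * l) = (cmod (chi t) ^ 2) powr l"
      proof -
        have p2: "cmod (chi t) powr 2 = cmod (chi t) ^ 2" by (rule powr_numeral) simp
        show ?thesis by (simp only: powr_powr flip: p2)
      qed
      also have "\<dots> = (\<Prod>k\<in>{1..L}. (2 + 2 * cos (\<Lambda> k * t)) powr l)"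
        unfolding chisq by (rule prod_powr_distrib)
      also have "\<dots> = (\<Prod>v\<in>V. ((2 + 2 * cos (v * t)) powr l) ^ g v)"
        by (rule group[where F = "\<lambda>v. (2 + 2 * cos (v * t)) powr l"])
      also have "\<dots> = (\<Prod>v\<in>V. h v (cos (v * t)))"
      proof (rule prod.cong[OF refl])
        fix v assume v: "v \<in> V"
        have "0 \<le> 2 + 2 * cos (v * t)" using cos_ge_minus_one[of "v * t"] by linarith
        then show "((2 + 2 * cos (v * t)) powr l) ^ g v = h v (cos (v * t))"
          unfolding h_def using pow_powr_nat[of "2 + 2 * cos (v * t)" "g v" l] gpos[OF v] by simp
      qed
      finally show ?thesis .
    qed
    have cont: "continuous_on {-1..1} (h v)" if "v \<in> V" for v
      unfolding h_def
      by (rule continuous_on_powr') (use sp[OF that] in \<open>auto intro!: continuous_intros\<close>)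
    have bnd: "\<bar>h v x\<bar> \<le> 4 powr (l * real L)" if "v \<in> V" "x \<in> {-1..1}" for v x
    proof -
      have x: "0 \<le> 2 + 2 * x" "2 + 2 * x \<le> 4" using that(2) by auto
      have "\<bar>h v x\<bar> = (2 + 2 * x) powr (l * real (g v))" unfolding h_def by simp
      also have "\<dots> \<le> 4 powr (l * real (g v))"
        by (rule powr_mono2) (use x sp[OF that(1)] in auto)
      also have "\<dots> \<le> 4 powr (l * real L)"
        by (rule powr_mono) (use l gle[of v] in auto)
      finally show ?thesis .
    qed
    have hm: "has_time_average (\<lambda>t. \<Prod>v\<in>V. h v (cos (v * t))) (\<Prod>v\<in>V. Mf (h v))"
      by (rule hta_main[OF finV indV cont bnd]) auto
    have "(\<Prod>v\<in>V. Mf (h v)) = (\<Prod>v\<in>V. 4 powr (l * real (g v)) * Gamma (1/2 + l * real (g v))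
              / (sqrt pi * Gamma (1 + l * real (g v))))"
    proof (rule prod.cong[OF refl])
      fix v assume v: "v \<in> V"
      show "Mf (h v) = 4 powr (l * real (g v)) * Gamma (1/2 + l * real (g v))
              / (sqrt pi * Gamma (1 + l * real (g v)))"
        unfolding h_def by (rule Mf_target[OF sp[OF v]])
    qed
    moreover have "(\<lambda>t. cmod (chi t) powr (2 * l)) = (\<lambda>t. \<Prod>v\<in>V. h v (cos (v * t)))"
      using eqf by (rule ext)
    ultimately show ?thesis using hm by simp
  qed
  have part1: "has_time_average (\<lambda>t. cmod (chi t) powr (2 * lam))
           (\<Prod>v\<in>V. 4 powr (lam * real (g v)) * Gamma (1/2 + lam * real (g v))
              / (sqrt pi * Gamma (1 + lam * real (g v))))"
  proof (cases "lam = 0")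
    case False
    then show ?thesis using main lam by simp
  next
    case True
    have val: "(\<Prod>v\<in>V. 4 powr (lam * real (g v)) * Gamma (1/2 + lam * real (g v))
              / (sqrt pi * Gamma (1 + lam * real (g v)))) = 1"
      using True by (simp add: Gamma_one_half_real Gamma_1)
    define Z where "Z = {t. chi t = 0}"
    have Zsub: "Z \<subseteq> (\<Union>k\<in>{1..L}. {t. cos (\<Lambda> k * t) = -1})"
    proof
      fix t assume "t \<in> Z"
      then have "(\<Prod>k\<in>{1..L}. 2 + 2 * cos (\<Lambda> k * t)) = 0"
        using chisq[of t] unfolding Z_def by simp
      then obtain k where k: "k \<in> {1..L}" "2 + 2 * cos (\<Lambda> k * t) = 0"
        by (auto simp: prod_zero_iff)
      then have "cos (\<Lambda> k * t) = -1" by linarith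
      then show "t \<in> (\<Union>k\<in>{1..L}. {t. cos (\<Lambda> k * t) = -1})" using k(1) by blast
    qed
    have negZ: "negligible Z"
    proof (rule countable_negligible)
      show "countable Z"
        by (rule countable_subset[OF Zsub]) (auto intro!: countable_UN cos_minus1_countable)
    qed
    have int: "((\<lambda>t. cmod (chi t) powr (2 * lam)) has_integral T) {0..T}" if "T > 0" for T
    proof (rule has_integral_spike[OF negZ])
      show "((\<lambda>t. 1) has_integral T) {0..T}"
        using has_integral_const_real[of "1::real" 0 T] that by simp
      fix t assume "t \<in> {0..T} - Z"
      then have "chi t \<noteq> 0" unfolding Z_def by auto
      then show "cmod (chi t) powr (2 * lam) = 1" using True by simp
    qed
    have "eventually (\<lambda>T. integral {0..T} (\<lambda>t. cmod (chi t) powr (2 * lam)) / T = 1) at_top"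
      using eventually_gt_at_top[of "0::real"]
    proof eventually_elim
      case (elim T)
      then show ?case using integral_unique[OF int[OF elim]] by simp
    qed
    then have "((\<lambda>T. integral {0..T} (\<lambda>t. cmod (chi t) powr (2 * lam)) / T) \<longlongrightarrow> 1) at_top"
      by (rule tendsto_eventually)
    moreover have "\<forall>T>0. (\<lambda>t. cmod (chi t) powr (2 * lam)) integrable_on {0..T}"
      using int by blast
    ultimately show ?thesis unfolding has_time_average_def val by simp
  qed
  have part2: "has_time_average (\<lambda>t. cmod (chi t)) ((4 / pi) ^ L)" if g1: "\<forall>v\<in>V. g v = 1"
  proof -
    have m: "has_time_average (\<lambda>t. cmod (chi t) powr (2 * (1/2)))
           (\<Prod>v\<in>V. 4 powr ((1/2) * real (g v)) * Gamma (1/2 + (1/2) * real (g v))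
              / (sqrt pi * Gamma (1 + (1/2) * real (g v))))"
      by (rule main) simp
    have G32: "Gamma (1 + 1/2 :: real) = sqrt pi / 2"
    proof -
      have "Gamma (1/2 + 1 :: real) = 1/2 * Gamma (1/2)"
      proof (rule Gamma_plus1)
        show "(1/2::real) \<notin> \<int>\<^sub>\<le>\<^sub>0"
        proof
          assume "(1/2::real) \<in> \<int>\<^sub>\<le>\<^sub>0"
          then have "(1/2::real) \<le> 0" by (rule nonpos_Ints_nonpos)
          then show False by simp
        qed
      qed
      then show ?thesis by (simp add: Gamma_one_half_real add.commute)
    qed
    have f4: "4 powr (1/2 :: real) = 2"
      by (simp add: powr_half_sqrt)
    have "(\<Prod>v\<in>V. 4 powr ((1/2) * real (g v)) * Gamma (1/2 + (1/2) * real (g v))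
              / (sqrt pi * Gamma (1 + (1/2) * real (g v)))) = (\<Prod>v\<in>V. 4 / pi)"
    proof (rule prod.cong[OF refl])
      fix v assume "v \<in> V"
      then have "g v = 1" using g1 by blast
      then show "4 powr ((1/2) * real (g v)) * Gamma (1/2 + (1/2) * real (g v))
              / (sqrt pi * Gamma (1 + (1/2) * real (g v))) = 4 / pi"
      proof -
        have G32': "Gamma (3/2 :: real) = sqrt pi / 2" using G32 by simp
        have sp2: "sqrt pi * (sqrt pi / 2) = pi / 2" by simp
        have e: "(1/2::real) * real (g v) = 1/2" using \<open>g v = 1\<close> by simp
        have hh: "(1/2::real) + 1/2 = 1" by simp
        have "4 powr ((1/2) * real (g v)) * Gamma (1/2 + (1/2) * real (g v))
              / (sqrt pi * Gamma (1 + (1/2) * real (g v))) = 2 * 1 / (sqrt pi * (sqrt pi / 2))"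
          by (simp only: e hh f4 G32 Gamma_1)
        also have "\<dots> = 2 / (pi / 2)" by (simp only: sp2)
        also have "\<dots> = 4 / pi" by simp
        finally show ?thesis .
      qed
    qed
    also have "\<dots> = (4 / pi) ^ card V" by simp
    also have "card V = L"
    proof -
      have "inj_on \<Lambda> {1..L}"
      proof (rule inj_onI)
        fix a b assume a: "a \<in> {1..L}" and b: "b \<in> {1..L}" and ab: "\<Lambda> a = \<Lambda> b"
        have "\<Lambda> a \<in> V" using a unfolding V_def by auto
        then have "card {k\<in>{1..L}. \<Lambda> k = \<Lambda> a} = 1" using g1 unfolding g_def by blast
        then obtain c where c: "{k\<in>{1..L}. \<Lambda> k = \<Lambda> a} = {c}" by (rule card_1_singletonE)
        have "a \<in> {k\<in>{1..L}. \<Lambda> k = \<Lambda> a}" using a by simp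
        then have ac: "a = c" unfolding c by simp
        have "b \<in> {k\<in>{1..L}. \<Lambda> k = \<Lambda> a}" using b ab by simp
        then have bc: "b = c" unfolding c by simp
        show "a = b" using ac bc by simp
      qed
      then show ?thesis unfolding V_def by (simp add: card_image)
    qed
    finally have val: "(\<Prod>v\<in>V. 4 powr ((1/2) * real (g v)) * Gamma (1/2 + (1/2) * real (g v))
              / (sqrt pi * Gamma (1 + (1/2) * real (g v)))) = (4 / pi) ^ L" .
    have eqfun: "(\<lambda>t. cmod (chi t) powr (2 * (1/2))) = (\<lambda>t. cmod (chi t))"
    proof (rule ext)
      fix t
      have "(2::real) * (1/2) = 1" by simp
      then show "cmod (chi t) powr (2 * (1/2)) = cmod (chi t)" by (simp only: powr_one norm_ge_zero)
    qed
    show ?thesis using m unfolding eqfun val .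
  qed
  show ?thesis
    apply (intro conjI impI)
     apply (rule part1[unfolded V_def])
    apply (rule part2[unfolded V_def])
    apply assumption
    done
qed

end
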